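(* Let $(M_n)_{n\ge0}$ be a locally square integrable real martingale with $M_0=0$, adapted to $(\mathcal{F}_n)$, which is heavy on left. Then for all $n\ge1$ and all $x,y>0$, $$\mathbb{P}\big(M_n\ge x,\ [M]_n\le y\big)\le\exp\left(-\frac{x^2}{2y}\right).$$
   Context: Write $\Delta M_k=M_k-M_{k-1}$ and $[M]_n=\sum_{k=1}^n\Delta M_k^2$. For $a>0$ and real $x$ let $T_a(x)=\min(|x|,a)\,\mathrm{sign}(x)$. The martingale $(M_n)$ is called heavy on left if for all $n\ge1$ and all $a>0$, $\mathbb{E}[T_a(\Delta M_n)\mid\mathcal{F}_{n-1}]\le0$ a.s. *)

theory Defs
  imports "HOL-Probability.Probability"
begin

definition filtration :: "'a measure \<Rightarrow> (nat \<Rightarrow> 'a measure) \<Rightarrow> bool" where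
  "filtration P F \<longleftrightarrow> (\<forall>n. subalgebra P (F n)) \<and> (\<forall>n m. n \<le> m \<longrightarrow> sets (F n) \<subseteq> sets (F m))"

definition martingale :: "'a measure \<Rightarrow> (nat \<Rightarrow> 'a measure) \<Rightarrow> (nat \<Rightarrow> 'a \<Rightarrow> real) \<Rightarrow> bool" where
  "martingale P F M \<longleftrightarrow> filtration P F \<and>
     (\<forall>n. M n \<in> borel_measurable (F n)) \<and>
     (\<forall>n. integrable P (M n)) \<and>
     (\<forall>n. AE \<omega> in P. real_cond_exp P (F n) (M (Suc n)) \<omega> = M n \<omega>)"

definition locally_square_integrable :: "'a measure \<Rightarrow> (nat \<Rightarrow> 'a \<Rightarrow> real) \<Rightarrow> bool" where
  "locally_square_integrable P M \<longleftrightarrow> (\<forall>n. integrable P (\<lambda>\<omega>. (M n \<omega>)\<^sup>2))"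

definition trunc :: "real \<Rightarrow> real \<Rightarrow> real" where
  "trunc a x = min \<bar>x\<bar> a * sgn x"

definition incr :: "(nat \<Rightarrow> 'a \<Rightarrow> real) \<Rightarrow> nat \<Rightarrow> 'a \<Rightarrow> real" where
  "incr M k \<omega> = M k \<omega> - M (k - 1) \<omega>"

definition qvar :: "(nat \<Rightarrow> 'a \<Rightarrow> real) \<Rightarrow> nat \<Rightarrow> 'a \<Rightarrow> real" where
  "qvar M n \<omega> = (\<Sum>k=1..n. (incr M k \<omega>)\<^sup>2)"

definition heavy_on_left :: "'a measure \<Rightarrow> (nat \<Rightarrow> 'a measure) \<Rightarrow> (nat \<Rightarrow> 'a \<Rightarrow> real) \<Rightarrow> bool" where
  "heavy_on_left P F M \<longleftrightarrow> (\<forall>n\<ge>1. \<forall>a>0.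
     AE \<omega> in P. real_cond_exp P (F (n - 1)) (\<lambda>\<xi>. trunc a (incr M n \<xi>)) \<omega> \<le> 0)"

end

theory Submission
  imports Defs
begin


definition wk :: "real \<Rightarrow> real" where
  "wk a = exp (-a - a\<^sup>2/2) * ((1+a)\<^sup>2 - 1)"
definition psi :: "real \<Rightarrow> real" where
  "psi u = 1 - exp (-u - u\<^sup>2/2)"
definition phi :: "real \<Rightarrow> real" where
  "phi s = exp (s - s\<^sup>2/2)"

lemma wk_nonneg: "a \<ge> 0 \<Longrightarrow> wk a \<ge> 0"
proof -
  assume "a \<ge> 0"
  moreover have "(1+a)\<^sup>2 - 1 = a*(a+2)" by (simp add: power2_eq_square algebra_simps)
  ultimately show ?thesis unfolding wk_def by (metis exp_ge_zero mult_nonneg_nonneg add_nonneg_nonneg zero_le_numeral)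
qed

lemma wk_meas[measurable]: "wk \<in> borel_measurable borel"
  unfolding wk_def by measurable

lemma psi_bounds: "u \<ge> 0 \<Longrightarrow> 0 \<le> psi u \<and> psi u \<le> 1"
proof -
  assume u: "u \<ge> 0"
  then have "-u - u\<^sup>2/2 \<le> 0" using zero_le_power2[of u] by linarith
  then show ?thesis unfolding psi_def by simp
qed

lemma psi_meas[measurable]: "psi \<in> borel_measurable borel"
  unfolding psi_def by measurable

lemma phi_meas[measurable]: "phi \<in> borel_measurable borel"
  unfolding phi_def by measurable

lemma phi_le: "phi s \<le> exp (1/2)"
  unfolding phi_def proof -
  have "0 \<le> (s - 1)\<^sup>2" by simp
  then have "s - s\<^sup>2/2 \<le> 1/2" by (simp add: power2_eq_square algebra_simps)
  then show "exp (s - s\<^sup>2/2) \<le> exp (1/2)" by simp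
qed

lemma tanh_like: "(u::real) \<ge> 0 \<Longrightarrow> exp u - exp (-u) \<le> u * (exp u + exp (-u))"
proof -
  assume u: "u \<ge> 0"
  let ?r = "\<lambda>u. u * (exp u + exp (-u)) - (exp u - exp (-u))"
  have "?r 0 \<le> ?r u"
  proof (rule DERIV_nonneg_imp_nondecreasing[where a=0 and b=u, OF u])
    fix v assume v: "0 \<le> v" "v \<le> u"
    show "\<exists>y. DERIV ?r v :> y \<and> 0 \<le> y"
    proof (intro exI conjI)
      show "DERIV ?r v :> v * (exp v - exp (-v))"
        by (rule derivative_eq_intros refl | simp)+
      show "0 \<le> v * (exp v - exp (-v))" using v by simp
    qed
  qed
  then show ?thesis by simp
qed

lemma cosh_ineq: "(u::real) \<ge> 0 \<Longrightarrow> exp (-u\<^sup>2/2) * (exp u + exp (-u)) \<le> 2"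
proof -
  assume u: "u \<ge> 0"
  let ?q = "\<lambda>u. exp (-u\<^sup>2/2) * (exp u + exp (-u))"
  have "?q u \<le> ?q 0"
  proof (rule DERIV_nonpos_imp_nonincreasing[where a=0 and b=u, OF u])
    fix v assume v: "0 \<le> v" "v \<le> u"
    show "\<exists>y. DERIV ?q v :> y \<and> y \<le> 0"
    proof (intro exI conjI)
      show "DERIV ?q v :> exp (-v\<^sup>2/2) * ((exp v - exp (-v)) - v * (exp v + exp (-v)))"
        by (rule derivative_eq_intros refl | simp)+ (simp add: algebra_simps)
      show "exp (-v\<^sup>2/2) * ((exp v - exp (-v)) - v * (exp v + exp (-v))) \<le> 0"
        using tanh_like[OF v(1)] by (intro mult_nonneg_nonpos) auto
    qed
  qed
  then show ?thesis by simp
qed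

lemma phi_psi: "phi s \<le> 1 + psi (max s 0) - psi (max (-s) 0)"
proof (cases "s > 0")
  case True
  have "exp (s - s\<^sup>2/2) + exp (-s - s\<^sup>2/2) = exp (-s\<^sup>2/2) * (exp s + exp (-s))"
    by (simp add: algebra_simps flip: exp_add)
  with cosh_ineq[of s] True show ?thesis
    by (simp add: phi_def psi_def)
next
  case False
  then show ?thesis by (simp add: phi_def psi_def max_def)
qed

lemma psi_repr:
  assumes u: "(u::real) \<ge> 0"
  shows "(\<integral>\<^sup>+a. ennreal (wk a * min u a) * indicator {0..} a \<partial>lborel) = ennreal (psi u)"
proof -
  define G where "G a = 1 - exp (-a - a\<^sup>2/2) - a*(1+a)*exp (-a - a\<^sup>2/2)" for a :: real
  define H where "H a = -(1+a)*exp (-a - a\<^sup>2/2)" for a :: real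
  have dG: "DERIV G a :> a * wk a" for a
    unfolding G_def wk_def
    by (rule derivative_eq_intros refl | simp)+ (simp add: algebra_simps power2_eq_square)
  have dH: "DERIV H a :> wk a" for a
    unfolding H_def wk_def
    by (rule derivative_eq_intros refl | simp)+ (simp add: algebra_simps power2_eq_square)
  have limH: "(H \<longlongrightarrow> 0) at_top"
    unfolding H_def by real_asymp
  have G0: "G 0 = 0" by (simp add: G_def)
  have Gu: "G 0 \<le> G u"
    by (rule DERIV_nonneg_imp_nondecreasing[where a=0 and b=u, OF u])
       (use dG wk_nonneg in \<open>auto intro!: mult_nonneg_nonneg\<close>)
  have hnn: "0 \<le> - H u" proof - have "- H u = (1+u) * exp (-u - u\<^sup>2/2)" by (simp add: H_def algebra_simps) then show ?thesis using u by simp qed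
  have "ennreal (G u - G 0) + ennreal u * ennreal (0 - H u) = ennreal (G u) + ennreal (u * (- H u))"
    using G0 u hnn by (simp add: ennreal_mult[symmetric])
  also have "\<dots> = ennreal (G u + u * (- H u))"
    by (rule ennreal_plus[symmetric]) (use Gu G0 hnn u in \<open>auto simp: mult_nonneg_nonpos\<close>)
  finally have aux: "ennreal (G u - G 0) + ennreal u * ennreal (0 - H u) = ennreal (G u + u * (- H u))" .
  have "AE a in lborel. ennreal (wk a * min u a) * indicator {0..} a =
      ennreal (a * wk a) * indicator {0..u} a + ennreal u * (ennreal (wk a) * indicator {u..} a)"
    using AE_lborel_singleton[of u]
  proof eventually_elim
    case (elim a)
    show ?case
      using elim u wk_nonneg[of a]
      by (auto simp: indicator_def min_def ennreal_mult' mult.commute)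
  qed
  then have "(\<integral>\<^sup>+a. ennreal (wk a * min u a) * indicator {0..} a \<partial>lborel) =
     (\<integral>\<^sup>+a. ennreal (a * wk a) * indicator {0..u} a + ennreal u * (ennreal (wk a) * indicator {u..} a) \<partial>lborel)"
    by (rule nn_integral_cong_AE)
  also have "\<dots> = (\<integral>\<^sup>+a. ennreal (a * wk a) * indicator {0..u} a \<partial>lborel) +
       ennreal u * (\<integral>\<^sup>+a. ennreal (wk a) * indicator {u..} a \<partial>lborel)"
    by (simp add: nn_integral_add nn_integral_cmult)
  also have "(\<integral>\<^sup>+a. ennreal (a * wk a) * indicator {0..u} a \<partial>lborel) = ennreal (G u - G 0)"
    by (rule nn_integral_FTC_Icc) (use dG wk_nonneg u in \<open>auto\<close>)
  also have "(\<integral>\<^sup>+a. ennreal (wk a) * indicator {u..} a \<partial>lborel) = ennreal (0 - H u)"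
    by (rule nn_integral_FTC_atLeast[OF _ _ _ limH]) (use dH wk_nonneg u in \<open>auto\<close>)
  also have "ennreal (G u - G 0) + ennreal u * ennreal (0 - H u) = ennreal (G u + u * (- H u))" by (rule aux)
  also have "G u + u * (- H u) = psi u"
    by (simp add: G_def H_def psi_def algebra_simps)
  finally show ?thesis .
qed


lemma repr_int:
  assumes P: "prob_space P"
  and [measurable]: "Z \<in> borel_measurable P" "g \<in> borel_measurable P"
  and Zb: "\<And>\<omega>. \<omega> \<in> space P \<Longrightarrow> 0 \<le> Z \<omega> \<and> Z \<omega> \<le> B"
  and gnn: "\<And>\<omega>. \<omega> \<in> space P \<Longrightarrow> 0 \<le> g \<omega>"
  shows "ennreal (\<integral>\<omega>. Z \<omega> * psi (g \<omega>) \<partial>P) =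
    (\<integral>\<^sup>+a. (\<integral>\<^sup>+\<omega>. ennreal (Z \<omega>) * (ennreal (wk a * min (g \<omega>) a) * indicator {0..} a) \<partial>P) \<partial>lborel)"
proof -
  interpret prob_space P by (rule P)
  interpret pair_sigma_finite P lborel
    by (simp add: pair_sigma_finite_def prob_space_imp_sigma_finite[OF P] lborel.sigma_finite_measure_axioms)
  have int: "integrable P (\<lambda>\<omega>. Z \<omega> * psi (g \<omega>))"
  proof (rule integrable_const_bound[where B=B])
    show "AE x in P. norm (Z x * psi (g x)) \<le> B"
    proof (rule AE_I2)
      fix x assume x: "x \<in> space P"
      have "0 \<le> psi (g x)" "psi (g x) \<le> 1" using psi_bounds gnn[OF x] by auto
      then have "Z x * psi (g x) \<le> Z x * 1" "0 \<le> Z x * psi (g x)" using Zb[OF x] by (intro mult_left_mono mult_nonneg_nonneg; simp)+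
      then show "norm (Z x * psi (g x)) \<le> B" using Zb[OF x] by simp
    qed
  qed measurable
  have "ennreal (\<integral>\<omega>. Z \<omega> * psi (g \<omega>) \<partial>P) = (\<integral>\<^sup>+\<omega>. ennreal (Z \<omega> * psi (g \<omega>)) \<partial>P)"
    by (rule nn_integral_eq_integral[symmetric, OF int]) (use Zb gnn psi_bounds in \<open>auto intro!: AE_I2\<close>)
  also have "\<dots> = (\<integral>\<^sup>+\<omega>. ennreal (Z \<omega>) * (\<integral>\<^sup>+a. ennreal (wk a * min (g \<omega>) a) * indicator {0..} a \<partial>lborel) \<partial>P)"
  proof (rule nn_integral_cong)
    fix \<omega> assume w: "\<omega> \<in> space P"
    then have "0 \<le> psi (g \<omega>)" "0 \<le> Z \<omega>" "0 \<le> g \<omega>" using Zb gnn psi_bounds by auto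
    then show "ennreal (Z \<omega> * psi (g \<omega>)) = ennreal (Z \<omega>) * (\<integral>\<^sup>+a. ennreal (wk a * min (g \<omega>) a) * indicator {0..} a \<partial>lborel)"
      by (simp add: psi_repr ennreal_mult)
  qed
  also have "\<dots> = (\<integral>\<^sup>+\<omega>. (\<integral>\<^sup>+a. ennreal (Z \<omega>) * (ennreal (wk a * min (g \<omega>) a) * indicator {0..} a) \<partial>lborel) \<partial>P)"
    by (rule nn_integral_cong) (simp add: nn_integral_cmult)
  also have "\<dots> = (\<integral>\<^sup>+a. (\<integral>\<^sup>+\<omega>. ennreal (Z \<omega>) * (ennreal (wk a * min (g \<omega>) a) * indicator {0..} a) \<partial>P) \<partial>lborel)"
    by (rule Fubini'[symmetric]) measurable
  finally show ?thesis .
qed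

lemma inner_eq:
  assumes P: "prob_space P"
  and [measurable]: "Z \<in> borel_measurable P" "g \<in> borel_measurable P"
  and Zb: "\<And>\<omega>. \<omega> \<in> space P \<Longrightarrow> 0 \<le> Z \<omega> \<and> Z \<omega> \<le> B"
  and gnn: "\<And>\<omega>. \<omega> \<in> space P \<Longrightarrow> 0 \<le> g \<omega>"
  and a: "a \<ge> 0"
  shows "(\<integral>\<^sup>+\<omega>. ennreal (Z \<omega>) * (ennreal (wk a * min (g \<omega>) a) * indicator {0..} a) \<partial>P)
     = ennreal (wk a) * ennreal (\<integral>\<omega>. Z \<omega> * min (g \<omega>) a \<partial>P)"
proof -
  interpret prob_space P by (rule P)
  have int: "integrable P (\<lambda>\<omega>. Z \<omega> * min (g \<omega>) a)"
  proof (rule integrable_const_bound[where B="B*a"])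
    show "AE x in P. norm (Z x * min (g x) a) \<le> B * a"
    proof (rule AE_I2)
      fix x assume x: "x \<in> space P"
      have "0 \<le> min (g x) a" "min (g x) a \<le> a" using gnn[OF x] a by auto
      then show "norm (Z x * min (g x) a) \<le> B * a" using Zb[OF x] by (auto intro!: mult_mono simp: abs_mult)
    qed
  qed measurable
  have "(\<integral>\<^sup>+\<omega>. ennreal (Z \<omega>) * (ennreal (wk a * min (g \<omega>) a) * indicator {0..} a) \<partial>P)
     = (\<integral>\<^sup>+\<omega>. ennreal (wk a) * ennreal (Z \<omega> * min (g \<omega>) a) \<partial>P)"
    by (rule nn_integral_cong) (use Zb gnn a wk_nonneg[OF a] in \<open>simp add: ennreal_mult'[symmetric] ennreal_mult[symmetric] mult_ac\<close>)
  also have "\<dots> = ennreal (wk a) * (\<integral>\<^sup>+\<omega>. ennreal (Z \<omega> * min (g \<omega>) a) \<partial>P)"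
    by (simp add: nn_integral_cmult)
  also have "(\<integral>\<^sup>+\<omega>. ennreal (Z \<omega> * min (g \<omega>) a) \<partial>P) = ennreal (\<integral>\<omega>. Z \<omega> * min (g \<omega>) a \<partial>P)"
    by (rule nn_integral_eq_integral[OF int]) (use Zb gnn a in \<open>auto intro!: AE_I2\<close>)
  finally show ?thesis .
qed

lemma compare:
  assumes P: "prob_space P"
  and [measurable]: "Z \<in> borel_measurable P" "D \<in> borel_measurable P"
  and Zb: "\<And>\<omega>. \<omega> \<in> space P \<Longrightarrow> 0 \<le> Z \<omega> \<and> Z \<omega> \<le> B"
  and H: "\<And>a. a > 0 \<Longrightarrow> (\<integral>\<omega>. Z \<omega> * min (max (D \<omega>) 0) a \<partial>P) \<le> (\<integral>\<omega>. Z \<omega> * min (max (- D \<omega>) 0) a \<partial>P)"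
  shows "(\<integral>\<omega>. Z \<omega> * psi (max (D \<omega>) 0) \<partial>P) \<le> (\<integral>\<omega>. Z \<omega> * psi (max (- D \<omega>) 0) \<partial>P)"
proof -
  have e1: "ennreal (\<integral>\<omega>. Z \<omega> * psi (max (D \<omega>) 0) \<partial>P) =
    (\<integral>\<^sup>+a. (\<integral>\<^sup>+\<omega>. ennreal (Z \<omega>) * (ennreal (wk a * min (max (D \<omega>) 0) a) * indicator {0..} a) \<partial>P) \<partial>lborel)"
    by (rule repr_int[OF P, of Z _ B, OF assms(2) _ Zb]) auto
  have e2: "ennreal (\<integral>\<omega>. Z \<omega> * psi (max (- D \<omega>) 0) \<partial>P) =
    (\<integral>\<^sup>+a. (\<integral>\<^sup>+\<omega>. ennreal (Z \<omega>) * (ennreal (wk a * min (max (- D \<omega>) 0) a) * indicator {0..} a) \<partial>P) \<partial>lborel)"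
    by (rule repr_int[OF P, of Z _ B, OF assms(2) _ Zb]) auto
  have "ennreal (\<integral>\<omega>. Z \<omega> * psi (max (D \<omega>) 0) \<partial>P) \<le> ennreal (\<integral>\<omega>. Z \<omega> * psi (max (- D \<omega>) 0) \<partial>P)"
    unfolding e1 e2
  proof (rule nn_integral_mono)
    fix a :: real assume "a \<in> space lborel"
    show "(\<integral>\<^sup>+\<omega>. ennreal (Z \<omega>) * (ennreal (wk a * min (max (D \<omega>) 0) a) * indicator {0..} a) \<partial>P)
      \<le> (\<integral>\<^sup>+\<omega>. ennreal (Z \<omega>) * (ennreal (wk a * min (max (- D \<omega>) 0) a) * indicator {0..} a) \<partial>P)"
    proof (cases "a \<ge> 0")
      case False then show ?thesis by simp
    next
      case True
      have le: "(\<integral>\<omega>. Z \<omega> * min (max (D \<omega>) 0) a \<partial>P) \<le> (\<integral>\<omega>. Z \<omega> * min (max (- D \<omega>) 0) a \<partial>P)"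
      proof (cases "a = 0")
        case True then show ?thesis by simp
      next
        case False then show ?thesis using H \<open>a \<ge> 0\<close> by simp
      qed
      have i1: "(\<integral>\<^sup>+\<omega>. ennreal (Z \<omega>) * (ennreal (wk a * min (max (D \<omega>) 0) a) * indicator {0..} a) \<partial>P)
         = ennreal (wk a) * ennreal (\<integral>\<omega>. Z \<omega> * min (max (D \<omega>) 0) a \<partial>P)"
        by (rule inner_eq[OF P, of Z _ B, OF assms(2) _ Zb _ True]) auto
      have i2: "(\<integral>\<^sup>+\<omega>. ennreal (Z \<omega>) * (ennreal (wk a * min (max (- D \<omega>) 0) a) * indicator {0..} a) \<partial>P)
         = ennreal (wk a) * ennreal (\<integral>\<omega>. Z \<omega> * min (max (- D \<omega>) 0) a \<partial>P)"
        by (rule inner_eq[OF P, of Z _ B, OF assms(2) _ Zb _ True]) auto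
      show ?thesis
        unfolding i1 i2
        using le by (intro mult_left_mono ennreal_leI) auto
    qed
  qed
  then show ?thesis
    by (rule ennreal_le_iff[THEN iffD1, rotated]) (use P Zb psi_bounds in \<open>auto intro!: integral_nonneg_AE AE_I2\<close>)
qed


lemma trunc_meas[measurable]: "trunc a \<in> borel_measurable borel"
  unfolding trunc_def by measurable

lemma trunc_bound: "a > 0 \<Longrightarrow> \<bar>trunc a d\<bar> \<le> a"
  unfolding trunc_def by (auto simp: abs_mult sgn_if)

lemma trunc_id:
  assumes "t > 0" "a > 0"
  shows "min (max (t*d) 0) a - min (max (-(t*d)) 0) a = t * trunc (a/t) d"
proof -
  consider "d > 0" | "d = 0" | "d < 0" by linarith
  then show ?thesis
  proof cases
    case 1
    then have "t * min d (a/t) = min (t*d) a" using assms by (simp add: min_def field_simps)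
    moreover have "t*d > 0" using mult_pos_pos[of t d] 1 assms(1) by simp
    moreover have "trunc (a/t) d = min d (a/t)" using 1 by (simp add: trunc_def)
    ultimately show ?thesis using assms by simp
  next
    case 2 then show ?thesis using assms by (simp add: trunc_def)
  next
    case 3
    then have "t * min (-d) (a/t) = min (-(t*d)) a" using assms by (simp add: min_def field_simps)
    moreover have "t*d < 0" using mult_pos_neg[of t d] 3 assms(1) by simp
    moreover have "trunc (a/t) d = - min (-d) (a/t)" using 3 by (simp add: trunc_def)
    ultimately show ?thesis using assms by simp
  qed
qed

lemma step:
  assumes P: "prob_space P" and G: "sigma_finite_subalgebra P G"
  and ZG: "Z \<in> borel_measurable G" and [measurable]: "D \<in> borel_measurable P"
  and Zb: "\<And>\<omega>. \<omega> \<in> space P \<Longrightarrow> 0 \<le> Z \<omega> \<and> Z \<omega> \<le> B"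
  and t: "t > 0"
  and HL: "\<And>a. a > 0 \<Longrightarrow> AE \<omega> in P. real_cond_exp P G (\<lambda>\<xi>. trunc a (D \<xi>)) \<omega> \<le> 0"
  shows "(\<integral>\<omega>. Z \<omega> * phi (t * D \<omega>) \<partial>P) \<le> (\<integral>\<omega>. Z \<omega> \<partial>P)"
proof -
  interpret prob_space P by (rule P)
  interpret sigma_finite_subalgebra P G by (rule G)
  have ZP[measurable]: "Z \<in> borel_measurable P" by (rule measurable_from_subalg[OF subalg ZG])
  obtain x0 where "x0 \<in> space P" using not_empty by blast
  then have B: "0 \<le> B" using Zb[of x0] by linarith
  have intb: "integrable P (\<lambda>\<omega>. Z \<omega> * f \<omega>)" if "f \<in> borel_measurable P" "\<And>\<omega>. \<omega> \<in> space P \<Longrightarrow> \<bar>f \<omega>\<bar> \<le> C" for f C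
  proof (rule integrable_const_bound[where B="B*C"])
    show "AE x in P. norm (Z x * f x) \<le> B * C"
    proof (rule AE_I2)
      fix x assume x: "x \<in> space P"
      show "norm (Z x * f x) \<le> B * C" using Zb[OF x] that(2)[OF x]
        by (auto simp: abs_mult intro!: mult_mono)
    qed
  qed (use that in simp)
  have h1: "(\<integral>\<omega>. Z \<omega> * trunc a (D \<omega>) \<partial>P) \<le> 0" if a: "a > 0" for a
  proof -
    have i: "integrable P (\<lambda>\<omega>. Z \<omega> * trunc a (D \<omega>))"
      by (rule intb) (use trunc_bound a in auto)
    have "(\<integral>\<omega>. Z \<omega> * trunc a (D \<omega>) \<partial>P) = (\<integral>\<omega>. Z \<omega> * real_cond_exp P G (\<lambda>\<xi>. trunc a (D \<xi>)) \<omega> \<partial>P)"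
      by (rule real_cond_exp_intg(2)[OF i ZG, symmetric]) measurable
    also have "\<dots> \<le> (\<integral>\<omega>. 0 \<partial>P)"
    proof (rule integral_mono_AE)
      show "integrable P (\<lambda>\<omega>. Z \<omega> * real_cond_exp P G (\<lambda>\<xi>. trunc a (D \<xi>)) \<omega>)"
        by (rule real_cond_exp_intg(1)[OF i ZG]) measurable
      show "AE \<omega> in P. Z \<omega> * real_cond_exp P G (\<lambda>\<xi>. trunc a (D \<xi>)) \<omega> \<le> 0"
        using HL[OF a] AE_space
      proof eventually_elim
        case (elim \<omega>) then show ?case using Zb[of \<omega>] by (auto intro: mult_nonneg_nonpos)
      qed
    qed simp
    finally show ?thesis by simp
  qed
  have h2: "(\<integral>\<omega>. Z \<omega> * min (max (t * D \<omega>) 0) a \<partial>P) \<le> (\<integral>\<omega>. Z \<omega> * min (max (- (t * D \<omega>)) 0) a \<partial>P)"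
    if a: "a > 0" for a
  proof -
    have i1: "integrable P (\<lambda>\<omega>. Z \<omega> * min (max (t * D \<omega>) 0) a)"
      by (rule intb[of _ a]) (use a in auto)
    have i2: "integrable P (\<lambda>\<omega>. Z \<omega> * min (max (- (t * D \<omega>)) 0) a)"
      by (rule intb[of _ a]) (use a in auto)
    have "(\<integral>\<omega>. Z \<omega> * min (max (t * D \<omega>) 0) a \<partial>P) - (\<integral>\<omega>. Z \<omega> * min (max (- (t * D \<omega>)) 0) a \<partial>P)
       = (\<integral>\<omega>. Z \<omega> * min (max (t * D \<omega>) 0) a - Z \<omega> * min (max (- (t * D \<omega>)) 0) a \<partial>P)"
      by (rule Bochner_Integration.integral_diff[OF i1 i2, symmetric])
    also have "\<dots> = (\<integral>\<omega>. t * (Z \<omega> * trunc (a/t) (D \<omega>)) \<partial>P)"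
      by (rule Bochner_Integration.integral_cong[OF refl]) (simp add: right_diff_distrib[symmetric] trunc_id[OF t a])
    also have "\<dots> = t * (\<integral>\<omega>. Z \<omega> * trunc (a/t) (D \<omega>) \<partial>P)"
      by simp
    also have "\<dots> \<le> 0"
      using h1[of "a/t"] a t by (simp add: mult_nonneg_nonpos)
    finally show ?thesis by simp
  qed
  have h3: "(\<integral>\<omega>. Z \<omega> * psi (max (t * D \<omega>) 0) \<partial>P) \<le> (\<integral>\<omega>. Z \<omega> * psi (max (- (t * D \<omega>)) 0) \<partial>P)"
    by (rule compare[OF P ZP _ Zb h2]) simp_all
  have ip: "integrable P (\<lambda>\<omega>. Z \<omega> * psi (max (t * D \<omega>) 0))"
    by (rule intb[of _ 1]) (use psi_bounds in \<open>auto simp: abs_le_iff\<close>)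
  have im: "integrable P (\<lambda>\<omega>. Z \<omega> * psi (max (- (t * D \<omega>)) 0))"
    by (rule intb[of _ 1]) (use psi_bounds in \<open>auto simp: abs_le_iff\<close>)
  have iz: "integrable P Z"
    using intb[of "\<lambda>_. 1" 1] by simp
  have iphi: "integrable P (\<lambda>\<omega>. Z \<omega> * phi (t * D \<omega>))"
    by (rule intb[of _ "exp (1/2)"]) (use phi_le in \<open>auto simp: phi_def\<close>)
  have "(\<integral>\<omega>. Z \<omega> * phi (t * D \<omega>) \<partial>P) \<le>
      (\<integral>\<omega>. Z \<omega> + Z \<omega> * psi (max (t * D \<omega>) 0) - Z \<omega> * psi (max (- (t * D \<omega>)) 0) \<partial>P)"
  proof (rule integral_mono[OF iphi])
    show "integrable P (\<lambda>\<omega>. Z \<omega> + Z \<omega> * psi (max (t * D \<omega>) 0) - Z \<omega> * psi (max (- (t * D \<omega>)) 0))"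
      using iz ip im by simp
    fix \<omega> assume w: "\<omega> \<in> space P"
    have "Z \<omega> * phi (t * D \<omega>) \<le> Z \<omega> * (1 + psi (max (t * D \<omega>) 0) - psi (max (- (t * D \<omega>)) 0))"
      using Zb[OF w] phi_psi by (intro mult_left_mono) auto
    then show "Z \<omega> * phi (t * D \<omega>) \<le> Z \<omega> + Z \<omega> * psi (max (t * D \<omega>) 0) - Z \<omega> * psi (max (- (t * D \<omega>)) 0)"
      by (simp add: algebra_simps)
  qed
  also have "\<dots> = (\<integral>\<omega>. Z \<omega> \<partial>P) + (\<integral>\<omega>. Z \<omega> * psi (max (t * D \<omega>) 0) \<partial>P) - (\<integral>\<omega>. Z \<omega> * psi (max (- (t * D \<omega>)) 0) \<partial>P)"
    using iz ip im by simp
  also have "\<dots> \<le> (\<integral>\<omega>. Z \<omega> \<partial>P)" using h3 by simp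
  finally show ?thesis .
qed


theorem theorem4p1:
  fixes P :: "'a measure" and F :: "nat \<Rightarrow> 'a measure" and M :: "nat \<Rightarrow> 'a \<Rightarrow> real"
  assumes "prob_space P"
    and "martingale P F M"
    and "locally_square_integrable P M"
    and "\<forall>\<omega>\<in>space P. M 0 \<omega> = 0"
    and "heavy_on_left P F M"
    and "n \<ge> 1" and "x > 0" and "y > 0"
  shows "measure P {\<omega>\<in>space P. M n \<omega> \<ge> x \<and> qvar M n \<omega> \<le> y} \<le> exp (- x\<^sup>2 / (2 * y))"
proof -
  interpret prob_space P by (rule assms(1))
  have filt: "filtration P F" and measF: "\<And>k. M k \<in> borel_measurable (F k)"
    using assms(2) unfolding martingale_def by auto
  have subF: "\<And>k. subalgebra P (F k)" using filt unfolding filtration_def by auto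
  have monoF: "\<And>j k. j \<le> k \<Longrightarrow> sets (F j) \<subseteq> sets (F k)" using filt unfolding filtration_def by auto
  have sfs: "sigma_finite_subalgebra P (F k)" for k
    by (rule finite_measure_subalgebra_is_sigma_finite)
       (use assms(1) subF in \<open>auto simp: prob_space_def finite_measure_subalgebra_def finite_measure_subalgebra_axioms_def\<close>)
  have subFF: "subalgebra (F k) (F j)" if "j \<le> k" for j k
    using subF[of j] subF[of k] monoF[OF that] unfolding subalgebra_def by auto
  have measM: "M j \<in> borel_measurable (F k)" if "j \<le> k" for j k
    by (rule measurable_from_subalg[OF subFF[OF that] measF])
  have toP: "f \<in> borel_measurable P" if "f \<in> borel_measurable (F k)" for f :: "'a \<Rightarrow> real" and k
    by (rule measurable_from_subalg[OF subF that])
  have measQ: "qvar M k \<in> borel_measurable (F k)" for k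
  proof -
    have "(\<lambda>\<omega>. \<Sum>i=1..k. (M i \<omega> - M (i - 1) \<omega>)\<^sup>2) \<in> borel_measurable (F k)"
    proof (rule borel_measurable_sum)
      fix i assume "i \<in> {1..k}"
      then have "M i \<in> borel_measurable (F k)" "M (i - 1) \<in> borel_measurable (F k)"
        by (auto intro: measM)
      then show "(\<lambda>\<omega>. (M i \<omega> - M (i - 1) \<omega>)\<^sup>2) \<in> borel_measurable (F k)" by measurable
    qed
    then show ?thesis unfolding qvar_def incr_def .
  qed
  define t where "t = x / y"
  have t: "t > 0" using assms(7,8) by (simp add: t_def)
  define Z where "Z k \<omega> = exp (t * M k \<omega> - t\<^sup>2/2 * qvar M k \<omega>)" for k \<omega>
  have measZ: "Z k \<in> borel_measurable (F k)" for k
  proof -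
    note [measurable] = measM[OF order_refl] measQ
    show ?thesis unfolding Z_def by measurable
  qed
  have Z0: "Z 0 \<omega> = 1" if "\<omega> \<in> space P" for \<omega>
    using assms(4) that by (simp add: Z_def qvar_def)
  have Zrec: "Z (Suc k) \<omega> = Z k \<omega> * phi (t * incr M (Suc k) \<omega>)" for k \<omega>
  proof -
    have q: "qvar M (Suc k) \<omega> = qvar M k \<omega> + (incr M (Suc k) \<omega>)\<^sup>2"
      unfolding qvar_def by simp
    have m: "M (Suc k) \<omega> = M k \<omega> + incr M (Suc k) \<omega>"
      unfolding incr_def by simp
    show ?thesis unfolding Z_def phi_def q m
      by (simp add: exp_add[symmetric] algebra_simps power2_eq_square)
  qed
  have Zb: "0 \<le> Z k \<omega> \<and> Z k \<omega> \<le> exp (1/2) ^ k" if "\<omega> \<in> space P" for k \<omega>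
  proof (induction k)
    case 0 then show ?case using Z0[OF that] by simp
  next
    case (Suc k)
    have "Z k \<omega> * phi (t * incr M (Suc k) \<omega>) \<le> exp (1/2) ^ k * exp (1/2)"
      using Suc phi_le by (intro mult_mono) (auto simp: phi_def)
    then show ?case using Suc by (simp add: Zrec phi_def mult.commute)
  qed
  have intZ: "integrable P (Z k)" for k
  proof (rule integrable_const_bound[where B="exp (1/2) ^ k"])
    show "AE x in P. norm (Z k x) \<le> exp (1/2) ^ k" using Zb by (auto intro!: AE_I2)
  qed (rule toP[OF measZ])
  have EZ: "(\<integral>\<omega>. Z k \<omega> \<partial>P) \<le> 1" for k
  proof (induction k)
    case 0
    have "(\<integral>\<omega>. Z 0 \<omega> \<partial>P) = (\<integral>\<omega>. 1 \<partial>P)"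
      by (rule Bochner_Integration.integral_cong[OF refl]) (simp add: Z0)
    then show ?case by (simp add: prob_space)
  next
    case (Suc k)
    have D[measurable]: "incr M (Suc k) \<in> borel_measurable P"
    proof -
      have "M (Suc k) \<in> borel_measurable P" "M k \<in> borel_measurable P"
        using toP[OF measF] by auto
      then show ?thesis unfolding incr_def by simp
    qed
    have HL: "AE \<omega> in P. real_cond_exp P (F k) (\<lambda>\<xi>. trunc a (incr M (Suc k) \<xi>)) \<omega> \<le> 0" if "a > 0" for a
      using assms(5) that unfolding heavy_on_left_def by (metis diff_Suc_1 le_add1 plus_1_eq_Suc)
    have "(\<integral>\<omega>. Z (Suc k) \<omega> \<partial>P) = (\<integral>\<omega>. Z k \<omega> * phi (t * incr M (Suc k) \<omega>) \<partial>P)"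
      by (simp add: Zrec)
    also have "\<dots> \<le> (\<integral>\<omega>. Z k \<omega> \<partial>P)"
      by (rule step[OF assms(1) sfs measZ D _ t HL]) (use Zb in auto)
    finally show ?case using Suc by simp
  qed
  define A where "A = {\<omega>\<in>space P. M n \<omega> \<ge> x \<and> qvar M n \<omega> \<le> y}"
  have Asets: "A \<in> sets P"
  proof -
    note [measurable] = toP[OF measF] toP[OF measQ]
    show ?thesis unfolding A_def by measurable
  qed
  define c where "c = exp (x\<^sup>2 / (2 * y))"
  have lowZ: "c \<le> Z n \<omega>" if "\<omega> \<in> A" for \<omega>
  proof -
    from that have h: "x \<le> M n \<omega>" "qvar M n \<omega> \<le> y" by (auto simp: A_def)
    have "t * x \<le> t * M n \<omega>" using h t by simp
    moreover have "t\<^sup>2/2 * qvar M n \<omega> \<le> t\<^sup>2/2 * y" using h by (intro mult_left_mono) auto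
    moreover have "t * x - t\<^sup>2/2 * y = x\<^sup>2 / (2 * y)"
      using assms(8) by (simp add: t_def power2_eq_square field_simps)
    ultimately have "x\<^sup>2 / (2 * y) \<le> t * M n \<omega> - t\<^sup>2/2 * qvar M n \<omega>" by linarith
    then show ?thesis unfolding c_def Z_def by simp
  qed
  have intc: "integrable P (\<lambda>\<omega>. c * indicator A \<omega>)"
    using Asets by (intro integrable_mult_right integrable_real_indicator) (auto simp: emeasure_eq_measure)
  have "c * measure P A = (\<integral>\<omega>. c * indicator A \<omega> \<partial>P)"
    using Asets by (simp add: Int_absorb2 sets.sets_into_space)
  also have "\<dots> \<le> (\<integral>\<omega>. Z n \<omega> \<partial>P)"
  proof (rule integral_mono[OF intc intZ])
    fix \<omega> assume "\<omega> \<in> space P"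
    then show "c * indicator A \<omega> \<le> Z n \<omega>"
      using lowZ[of \<omega>] Zb[of \<omega> n] by (auto simp: indicator_def)
  qed
  also have "\<dots> \<le> 1" by (rule EZ)
  finally have "c * measure P A \<le> 1" .
  then have "measure P A \<le> 1 / c" by (simp add: c_def field_simps)
  then show ?thesis by (simp add: A_def c_def exp_minus field_simps)
qed

end
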